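(* Let $f\in\mathcal L^1_1([0,1])$ be such that $\ln(n)\cdot\widehat T_1^n(f)\to\int f\,\mathrm{d}\mu_1$ uniformly on $Y=[1/2,1]$ as $n\to\infty$. Then $\ln(n)\cdot\widehat T_1^n(f)\to\int f\,\mathrm d\mu_1$ uniformly on every compact subset of $(0,1]$.
   Context: $T_1$ is the Farey map with inverse branches $f_{1,0}(x)=\frac x{1+x}$, $f_{1,1}(x)=\frac1{1+x}$; $\mathcal P_1 f=|f_{1,0}'|\,f\circ f_{1,0}+|f_{1,1}'|\,f\circ f_{1,1}$; $\mu_1$ is the measure with density $h_1(x)=1/x$ and $\mathcal L^1_1([0,1])$ the $\mu_1$-integrable functions; $\widehat T_1(f)=\mathcal P_1(fh_1)/h_1$. *)

theory Defs
  imports "HOL-Analysis.Analysis"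
begin

text \<open>Inverse branches of the Farey map T_1.\<close>
definition f10 :: "real \<Rightarrow> real" where "f10 x = x / (1 + x)"
definition f11 :: "real \<Rightarrow> real" where "f11 x = 1 / (1 + x)"

definition P1 :: "(real \<Rightarrow> real) \<Rightarrow> real \<Rightarrow> real" where
  "P1 g x = \<bar>deriv f10 x\<bar> * g (f10 x) + \<bar>deriv f11 x\<bar> * g (f11 x)"

definition h1 :: "real \<Rightarrow> real" where "h1 x = 1 / x"

definition mu1 :: "real measure" where
  "mu1 = density lborel (\<lambda>x. ennreal (indicator {0..1} x * h1 x))"

definition T1hat :: "(real \<Rightarrow> real) \<Rightarrow> real \<Rightarrow> real" where
  "T1hat g x = P1 (\<lambda>y. g y * h1 y) x / h1 x"

end

theory Submission
  imports Defs "HOL-Real_Asymp.Real_Asymp"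
begin

lemma deriv_f10: "y > 0 \<Longrightarrow> deriv f10 y = 1/(1+y)^2"
proof -
  assume y: "y > 0"
  have "(f10 has_real_derivative ((1*(1+y) - y*1)/((1+y)*(1+y)))) (at y)"
    unfolding f10_def[abs_def] using y
    by (intro derivative_eq_intros) auto
  then show ?thesis using DERIV_imp_deriv by (simp add: power2_eq_square)
qed

lemma deriv_f11: "y > 0 \<Longrightarrow> deriv f11 y = -1/(1+y)^2"
proof -
  assume y: "y > 0"
  have "(f11 has_real_derivative (- (1 * 1) / ((1+y)*(1+y)))) (at y)"
    unfolding f11_def[abs_def] using y
    by (intro derivative_eq_intros) (auto simp: power2_eq_square)
  then show ?thesis using DERIV_imp_deriv by (simp add: power2_eq_square)
qed

lemma T1hat_eq: "y > 0 \<Longrightarrow> T1hat g y = g (y/(1+y)) / (1+y) + y/(1+y) * g (1/(1+y))"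
proof -
  assume y: "y > 0"
  have "T1hat g y = y * (1/(1+y)^2 * (g (y/(1+y)) * ((1+y)/y)) + 1/(1+y)^2 * (g (1/(1+y)) * (1+y)))"
    unfolding T1hat_def P1_def h1_def using y
    by (simp add: deriv_f10 deriv_f11 f10_def f11_def)
  also have "\<dots> = g (y/(1+y)) / (1+y) + y/(1+y) * g (1/(1+y))"
  proof -
    have p: "1 + y \<noteq> 0" "y \<noteq> 0" using y by auto
    have t1: "y * (1/(1+y)^2 * (g (y/(1+y)) * ((1+y)/y))) = g (y/(1+y)) / (1+y)"
      using p by (simp add: power2_eq_square)
    have t2: "y * (1/(1+y)^2 * (g (1/(1+y)) * (1+y))) = y/(1+y) * g (1/(1+y))"
      using p by (simp add: power2_eq_square)
    show ?thesis using t1 t2 by (simp add: distrib_left)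
  qed
  finally show ?thesis .
qed

lemma ratio_lim: "(\<lambda>n. ln (real n) / ln (real (Suc n))) \<longlonglongrightarrow> 1"
  by real_asymp

lemma arith_aux: "A \<le> 2*B + 1*C \<Longrightarrow> C < e/8 \<Longrightarrow> B < e/4 \<Longrightarrow> 0 < e \<Longrightarrow> A < (e::real)"
  by linarith

theorem theorem4p15:
  fixes f :: "real \<Rightarrow> real"
  assumes "integrable mu1 f"
    and "uniform_limit {1/2..1} (\<lambda>n x. ln (real n) * (T1hat ^^ n) f x)
           (\<lambda>x. integral\<^sup>L mu1 f) sequentially"
  shows "\<forall>K. compact K \<and> K \<subseteq> {0<..1} \<longrightarrow>
           uniform_limit K (\<lambda>n x. ln (real n) * (T1hat ^^ n) f x)
             (\<lambda>x. integral\<^sup>L mu1 f) sequentially"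
proof -
  define c where "c = integral\<^sup>L mu1 f"
  define u where "u n = (T1hat ^^ n) f" for n
  define L where "L n x = ln (real n) * u n x" for n x
  define r where "r n = ln (real n) / ln (real (Suc n))" for n
  have usuc: "u (Suc n) y = u n (y/(1+y)) / (1+y) + y/(1+y) * u n (1/(1+y))" if "y > 0" for n y
    using T1hat_eq[OF that] by (simp add: u_def)
  have r01: "0 \<le> r n \<and> r n \<le> 1" if "n \<ge> 1" for n
    using that by (auto simp: r_def divide_le_eq)
  have rlim: "r \<longlonglongrightarrow> 1" using ratio_lim unfolding r_def .
  have main: "uniform_limit {1/(real k+2)..1} L (\<lambda>x. c) sequentially" for k
  proof (induction k)
    case 0
    then show ?case using assms(2) by (simp add: L_def u_def c_def)
  next
    case (Suc k)
    define a where "a = 1/(real k+2)"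
    have a: "0 < a" "a \<le> 1/2" unfolding a_def by (auto simp: field_simps)
    have aeq: "1/(real (Suc k)+2) = a/(1+a)" unfolding a_def by (simp add: field_simps)
    have IH: "\<forall>e>0. \<forall>\<^sub>F n in sequentially. \<forall>x\<in>{a..1}. dist (L n x) c < e"
      using Suc.IH unfolding uniform_limit_iff a_def by simp
    show ?case unfolding uniform_limit_iff aeq
    proof (intro allI impI)
      fix e :: real assume e: "e > 0"
      have e8: "e/8 > 0" using e by simp
      have E1: "\<forall>\<^sub>F n in sequentially. \<forall>x\<in>{a..1}. dist (L n x) c < e/8"
        using IH e8 by blast
      have E2: "\<forall>\<^sub>F n in sequentially. \<forall>x\<in>{a..1}. dist (L (Suc n) x) c < e/8"
        using E1 by (simp add: eventually_sequentially) (metis le_SucI)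
      have E3: "\<forall>\<^sub>F n in sequentially. \<bar>r n - 1\<bar> * \<bar>c\<bar> < e/8"
      proof -
        have "(\<lambda>n. \<bar>r n - 1\<bar> * \<bar>c\<bar>) \<longlonglongrightarrow> \<bar>1 - 1\<bar> * \<bar>c\<bar>"
          by (intro tendsto_intros rlim)
        then have "\<forall>u>0. \<forall>\<^sub>F n in sequentially. \<bar>r n - 1\<bar> * \<bar>c\<bar> < u"
          by (simp add: order_tendsto_iff)
        then show ?thesis using e8 by blast
      qed
      have E4: "\<forall>\<^sub>F n in sequentially. n \<ge> 1" by (simp add: eventually_ge_at_top)
      show "\<forall>\<^sub>F n in sequentially. \<forall>x\<in>{a/(1+a)..1}. dist (L n x) c < e"
        using E1 E2 E3 E4
      proof eventually_elim
        case (elim n)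
        show ?case
        proof
          fix z assume z: "z \<in> {a/(1+a)..1}"
          show "dist (L n z) c < e"
          proof (cases "z \<ge> a")
            case True
            then show ?thesis using elim(1) z e by force
          next
            case False
            define y where "y = z/(1-z)"
            have z1: "z < 1" using False a by auto
            have zpos: "z > 0" using z a by (auto intro: less_le_trans[of 0 "a/(1+a)"])
            have zy: "z = y/(1+y)" unfolding y_def using z1 by (simp add: field_simps)
            have ypos: "y > 0" unfolding y_def using zpos z1 by simp
            have ya: "y \<ge> a" using z zy a ypos by (simp add: field_simps)
            have y1: "y \<le> 1" unfolding y_def using False a z1 by (simp add: field_simps)
            define w where "w = 1/(1+y)"
            have ay: "a*y \<le> a" using y1 a mult_left_mono[of y 1 a] by simp
            have ay2: "a*(1+y) \<le> 1" using ay a unfolding distrib_left by linarith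
            have wa: "w \<in> {a..1}" unfolding w_def using ypos ay2 by (auto simp: le_divide_eq)
            have d1: "\<bar>L (Suc n) y - c\<bar> < e/8" using elim(2) ya y1 by (auto simp: dist_real_def)
            have d2: "\<bar>L n w - c\<bar> < e/8" using elim(1) wa by (auto simp: dist_real_def)
            have rr: "0 \<le> r n" "r n \<le> 1" using r01 elim(4) by auto
            have lnpos: "ln (real (Suc n)) > 0" using elim(4) by simp
            have key1: "ln (real n) * u (Suc n) y = r n * L (Suc n) y"
              unfolding r_def L_def using lnpos by simp
            have "\<bar>ln (real n) * u (Suc n) y - c\<bar> = \<bar>r n * (L (Suc n) y - c) + (r n - 1) * c\<bar>"
              using key1 by (simp add: algebra_simps)
            also have "\<dots> \<le> r n * \<bar>L (Suc n) y - c\<bar> + \<bar>r n - 1\<bar> * \<bar>c\<bar>"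
              using rr by (simp add: abs_mult abs_triangle_ineq[THEN order_trans])
            also have "\<dots> \<le> \<bar>L (Suc n) y - c\<bar> + \<bar>r n - 1\<bar> * \<bar>c\<bar>"
              using rr by (simp add: mult_left_le_one_le)
            finally have d3: "\<bar>ln (real n) * u (Suc n) y - c\<bar> < e/4"
              using d1 elim(3) by linarith
            have py: "1 + y \<noteq> 0" using ypos by simp
            have "(1+y) * u (Suc n) y = (1+y) * (u n (y/(1+y)) / (1+y)) + (1+y) * (y/(1+y) * u n (1/(1+y)))"
              using usuc[OF ypos, of n] by (simp add: distrib_left)
            also have "\<dots> = u n z + y * u n w" using py unfolding zy w_def by simp
            finally have "u n z = (1+y) * u (Suc n) y - y * u n w" by linarith
            hence "L n z = ln (real n) * ((1+y) * u (Suc n) y - y * u n w)"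
              unfolding L_def by simp
            hence "L n z - c = (1+y) * (ln (real n) * u (Suc n) y - c) - y * (L n w - c)"
              unfolding L_def by (simp add: algebra_simps)
            hence "\<bar>L n z - c\<bar> \<le> (1+y) * \<bar>ln (real n) * u (Suc n) y - c\<bar> + y * \<bar>L n w - c\<bar>"
              using ypos by (simp add: abs_mult abs_triangle_ineq4[THEN order_trans])
            also have "\<dots> \<le> 2 * \<bar>ln (real n) * u (Suc n) y - c\<bar> + 1 * \<bar>L n w - c\<bar>"
              using y1 by (intro add_mono mult_right_mono) auto
            finally have d4: "\<bar>L n z - c\<bar> \<le> 2 * \<bar>ln (real n) * u (Suc n) y - c\<bar> + 1 * \<bar>L n w - c\<bar>" .
            have "\<bar>L n z - c\<bar> < e" by (rule arith_aux[OF d4 d2 d3 e])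
            then show ?thesis by (simp add: dist_real_def)
          qed
        qed
      qed
    qed
  qed
  show ?thesis
  proof (intro allI impI)
    fix K :: "real set" assume K: "compact K \<and> K \<subseteq> {0<..1}"
    show "uniform_limit K (\<lambda>n x. ln (real n) * (T1hat ^^ n) f x) (\<lambda>x. integral\<^sup>L mu1 f) sequentially"
    proof (cases "K = {}")
      case True then show ?thesis by (simp add: uniform_limit_iff)
    next
      case False
      obtain m where m: "m \<in> K" "\<forall>x\<in>K. m \<le> x"
        using compact_attains_inf[OF conjunct1[OF K] False] by blast
      have mpos: "m > 0" using m K by auto
      obtain k :: nat where k: "1/m < real k" using reals_Archimedean2 by blast
      have "1/(real k + 2) \<le> m" using k mpos by (simp add: field_simps)
      hence sub: "K \<subseteq> {1/(real k+2)..1}" using m K by force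
      show ?thesis using uniform_limit_on_subset[OF main[of k] sub]
        by (simp add: L_def[abs_def] u_def c_def)
    qed
  qed
qed

end
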